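(* Let $A\in\mathcal{C}_n$ and $i,j\in\{1,\dots,n\}$. Then $A$ is irreducible with respect to $E_{ij}$ if and only if there exists a minimal zero $u$ of $A$ such that $(Au)_i=(Au)_j=0$ and $u_i+u_j>0$.
   Context: $\mathcal{C}_n$ denotes the cone of copositive matrices: real symmetric $n\times n$ matrices $A$ with $x^TAx\ge 0$ for all $x\in\mathbb{R}^n_+$. $E_{ij}$ is the $n\times n$ matrix with entries 1 at positions $(i,j)$ and $(j,i)$ and 0 elsewhere. For $\mathcal{M}\subset\mathcal{C}_n$ (or a single matrix $M$), $A$ is irreducible with respect to $\mathcal{M}$ if there do not exist $\gamma>0$ and $M\in\mathcal{M}\setminus\{0\}$ with $A-\gamma M\in\mathcal{C}_n$. A zero of $A$ is a nonzero $u\in\mathbb{R}^n_+$ with $u^TAu=0$; $\operatorname{Supp}(u)=\{i:u_i\ne0\}$; a zero $u$ is minimal if there is no zero $v$ with $\operatorname{Supp}(v)\subsetneq\operatorname{Supp}(u)$. *)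

theory Defs
  imports "HOL-Analysis.Analysis"
begin

definition copositive :: "real^'n^'n \<Rightarrow> bool" where
  "copositive A \<longleftrightarrow> transpose A = A \<and>
     (\<forall>x::real^'n. (\<forall>k. 0 \<le> x $ k) \<longrightarrow> 0 \<le> x \<bullet> (A *v x))"

definition Emat :: "'n \<Rightarrow> 'n \<Rightarrow> real^'n^'n" where
  "Emat i j = (\<chi> k l. if (k = i \<and> l = j) \<or> (k = j \<and> l = i) then 1 else 0)"

definition irreducible_wrt :: "real^'n^'n \<Rightarrow> (real^'n^'n) set \<Rightarrow> bool" where
  "irreducible_wrt A \<M> \<longleftrightarrow>
     \<not> (\<exists>\<gamma>::real. \<exists>M \<in> \<M> - {0}. \<gamma> > 0 \<and> copositive (A - \<gamma> *\<^sub>R M))"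

definition is_zero :: "real^'n^'n \<Rightarrow> real^'n \<Rightarrow> bool" where
  "is_zero A u \<longleftrightarrow> u \<noteq> 0 \<and> (\<forall>k. 0 \<le> u $ k) \<and> u \<bullet> (A *v u) = 0"

definition supp :: "real^'n \<Rightarrow> 'n set" where
  "supp u = {k. u $ k \<noteq> 0}"

definition minimal_zero :: "real^'n^'n \<Rightarrow> real^'n \<Rightarrow> bool" where
  "minimal_zero A u \<longleftrightarrow> is_zero A u \<and> \<not> (\<exists>v. is_zero A v \<and> supp v \<subset> supp u)"

end

theory Submission
  imports Defs
begin

lemma sym_inner:
  assumes "transpose A = A"
  shows "u \<bullet> (A *v v) = v \<bullet> (A *v (u::real^'n))"
proof -
  have "u \<bullet> (A *v v) = (u v* A) \<bullet> v" by (simp add: dot_lmul_matrix)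
  also have "\<dots> = (transpose A *v u) \<bullet> v" by (simp add: transpose_matrix_vector)
  finally show ?thesis using assms by (simp add: inner_commute)
qed

lemma ifm: "(if c then (1::real) else 0) * y = (if c then y else 0)" by simp
lemma Emat_apply: "(Emat i j *v x) $ k = (if k = i then x$j else 0) + (if k = j \<and> k \<noteq> i then x$i else (0::real))"
proof -
  have "(Emat i j *v x) $ k = (\<Sum>l\<in>UNIV. if (k = i \<and> l = j) \<or> (k = j \<and> l = i) then x$l else 0)"
    by (simp add: Emat_def matrix_vector_mult_def ifm)
  also have "\<dots> = (if k = i then x$j else 0) + (if k = j \<and> k \<noteq> i then x$i else (0::real))"
    by (cases "k = i"; cases "k = j"; simp add: sum.delta')
  finally show ?thesis .
qed
lemma Emat_form: "x \<bullet> (Emat i j *v x) = (if i = j then x$i * x$i else 2 * x$i * x$j)"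
proof -
  have "x \<bullet> (Emat i j *v x) = (\<Sum>k\<in>UNIV. (if k = i then x$k * x$j else 0) + (if k = j \<and> k \<noteq> i then x$k * x$i else (0::real)))"
    unfolding inner_vec_def by (rule sum.cong) (auto simp: Emat_apply)
  also have "\<dots> = (if i = j then x$i * x$i else 2 * x$i * x$j)"
    by (cases "i = j"; simp add: sum.distrib sum.delta' cong: conj_cong)
  finally show ?thesis .
qed

lemma transpose_Emat: "transpose (Emat i j) = Emat i j"
  by (auto simp: Emat_def transpose_def vec_eq_iff)

lemma Emat_nz: "Emat i j \<noteq> (0::real^'n^'n)"
proof
  assume "Emat i j = (0::real^'n^'n)"
  hence "Emat i j $ i $ j = (0::real)" by simp
  thus False by (simp add: Emat_def)
qed

lemma quad_expand:
  "(v + t *\<^sub>R z) \<bullet> (A *v (v + t *\<^sub>R z)) = v \<bullet> (A *v v) + t * (v \<bullet> (A *v z)) + t * (z \<bullet> (A *v v)) + t*t * (z \<bullet> (A *v (z::real^'n)))"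
  by (simp add: matrix_vector_right_distrib matrix_vector_mult_scaleR inner_add_left inner_add_right algebra_simps)

lemma inner_nonneg_cart:
  assumes "\<forall>k. 0 \<le> (x::real^'n) $ k" "\<forall>k. 0 \<le> y $ k"
  shows "0 \<le> x \<bullet> y"
  using assms by (auto simp: inner_vec_def intro!: sum_nonneg)

lemma inner_ge_term:
  assumes "\<forall>k. 0 \<le> (x::real^'n) $ k" "\<forall>k. 0 \<le> y $ k"
  shows "x$m * y$m \<le> x \<bullet> y"
proof -
  have "x$m * y$m \<le> (\<Sum>k\<in>UNIV. x$k * y$k)"
    using assms by (intro member_le_sum) auto
  thus ?thesis by (simp add: inner_vec_def)
qed

lemma real_quad_lemma:
  fixes a b :: real
  assumes "\<And>t. t > 0 \<Longrightarrow> 0 \<le> 2*t*a + t*t*b"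
  shows "0 \<le> a"
proof (rule ccontr)
  assume "\<not> 0 \<le> a"
  hence a: "a < 0" by simp
  define t where "t = -a / (\<bar>b\<bar> + 1)"
  have bp: "\<bar>b\<bar> + 1 > 0" by simp
  have t: "t > 0" unfolding t_def using a bp by (intro divide_pos_pos) auto
  have "t * \<bar>b\<bar> < -a"
  proof -
    have "t * (\<bar>b\<bar> + 1) = -a" by (simp add: t_def)
    thus ?thesis using t by (simp add: algebra_simps)
  qed
  hence "2*a + t*b < 0" using a by (smt (verit) abs_ge_self mult_left_mono t)
  hence "t * (2*a + t*b) < 0" using t by (simp add: mult_pos_neg)
  thus False using assms[OF t] by (simp add: algebra_simps)
qed

lemma zero_Anonneg:
  assumes cop: "copositive A" and z: "is_zero A u"
  shows "0 \<le> (A *v u) $ k"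
proof (rule real_quad_lemma)
  fix t :: real assume t: "t > 0"
  let ?e = "axis k (1::real)"
  have sym: "transpose A = A" using cop by (simp add: copositive_def)
  have nn: "\<forall>m. 0 \<le> (u + t *\<^sub>R ?e) $ m" using z t by (auto simp: is_zero_def axis_def)
  hence "0 \<le> (u + t *\<^sub>R ?e) \<bullet> (A *v (u + t *\<^sub>R ?e))" using cop by (simp add: copositive_def)
  also have "\<dots> = u \<bullet> (A *v u) + t * (u \<bullet> (A *v ?e)) + t * (?e \<bullet> (A *v u)) + t*t*(?e \<bullet> (A *v ?e))"
    by (rule quad_expand)
  also have "u \<bullet> (A *v ?e) = ?e \<bullet> (A *v u)" by (rule sym_inner[OF sym])
  also have "?e \<bullet> (A *v u) = (A *v u) $ k" by (simp add: inner_axis')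
  finally show "0 \<le> 2*t*((A *v u) $ k) + t*t*(?e \<bullet> (A *v ?e))"
    using z by (simp add: is_zero_def algebra_simps)
qed

lemma zero_Asupp:
  assumes cop: "copositive A" and z: "is_zero A u" and k: "u $ k \<noteq> 0"
  shows "(A *v u) $ k = 0"
proof -
  have nn: "\<And>m. 0 \<le> u$m * (A *v u)$m" using z zero_Anonneg[OF cop z] by (simp add: is_zero_def)
  have "(\<Sum>m\<in>UNIV. u$m * (A *v u)$m) = 0" using z by (simp add: is_zero_def inner_vec_def)
  hence "\<forall>m\<in>UNIV. u$m * (A *v u)$m = 0" using nn by (subst sum_nonneg_eq_0_iff[symmetric]) auto
  thus ?thesis using k by auto
qed

lemma min_ratio:
  fixes x z :: "real^'n"
  assumes x: "\<forall>k. 0 \<le> x$k" and z: "\<forall>k. 0 \<le> z$k" "z \<noteq> 0" and s: "supp z \<subseteq> supp x"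
  obtains t k0 where "t > 0" "\<forall>k. 0 \<le> x$k - t * z$k" "z$k0 > 0" "x$k0 - t * z$k0 = 0"
proof -
  let ?R = "(\<lambda>k. x$k / z$k) ` supp z"
  have ne: "supp z \<noteq> {}" using z by (auto simp: supp_def vec_eq_iff)
  have fin: "finite ?R" by simp
  have "Min ?R \<in> ?R" using ne by (intro Min_in) auto
  then obtain k0 where k0: "k0 \<in> supp z" "Min ?R = x$k0 / z$k0" by auto
  define t where "t = x$k0 / z$k0"
  have zk0: "z$k0 > 0" using k0 z by (auto simp: supp_def less_le)
  have xk0: "x$k0 > 0" using k0 s x by (auto simp: supp_def less_le)
  have tpos: "t > 0" using zk0 xk0 by (simp add: t_def)
  have "\<forall>k. 0 \<le> x$k - t * z$k"
  proof
    fix k show "0 \<le> x$k - t * z$k"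
    proof (cases "k \<in> supp z")
      case True
      hence zk: "z$k > 0" using z by (auto simp: supp_def less_le)
      have "t \<le> x$k / z$k" using True k0 fin by (simp add: t_def[symmetric]) (metis Min_le fin image_eqI)
      thus ?thesis using zk by (simp add: pos_le_divide_eq)
    next
      case False thus ?thesis using x by (simp add: supp_def)
    qed
  qed
  moreover have "x$k0 - t * z$k0 = 0" using zk0 by (simp add: t_def)
  ultimately show ?thesis using that tpos zk0 by blast
qed

lemma exists_minimal:
  assumes cop: "copositive A"
  shows "is_zero A u \<Longrightarrow> (A *v u)$i = 0 \<Longrightarrow> (A *v u)$j = 0 \<Longrightarrow> u$i + u$j > 0 \<Longrightarrow>
    \<exists>w. minimal_zero A w \<and> (A *v w)$i = 0 \<and> (A *v w)$j = 0 \<and> w$i + w$j > 0"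
proof (induction "card (supp u)" arbitrary: u rule: less_induct)
  case less
  have sym: "transpose A = A" using cop by (simp add: copositive_def)
  show ?case
  proof (cases "minimal_zero A u")
    case True thus ?thesis using less.prems by blast
  next
    case False
    then obtain v where v: "is_zero A v" "supp v \<subset> supp u" using less.prems(1) by (auto simp: minimal_zero_def)
    have u0: "\<forall>k. 0 \<le> u$k" "u \<noteq> 0" using less.prems(1) by (auto simp: is_zero_def)
    have v0: "\<forall>k. 0 \<le> v$k" "v \<noteq> 0" using v(1) by (auto simp: is_zero_def)
    obtain t k0 where t: "t > 0" "\<forall>k. 0 \<le> u$k - t * v$k" "v$k0 > 0" "u$k0 - t * v$k0 = 0"
      using min_ratio[OF u0(1) v0 psubset_imp_subset[OF v(2)]] by blast
    define w where "w = u - t *\<^sub>R v"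
    have wk: "\<And>k. w$k = u$k - t * v$k" by (simp add: w_def)
    have w0: "\<forall>k. 0 \<le> w$k" using t wk by auto
    have "k0 \<in> supp v" using t(3) by (simp add: supp_def)
    hence k0u: "k0 \<in> supp u" using v(2) by blast
    have k0w: "k0 \<notin> supp w" using t(4) wk by (simp add: supp_def)
    have "supp w \<subseteq> supp u"
    proof
      fix k assume "k \<in> supp w"
      hence "w$k \<noteq> 0" by (simp add: supp_def)
      show "k \<in> supp u"
      proof (rule ccontr)
        assume "k \<notin> supp u"
        hence "u$k = 0" "v$k = 0" using v(2) by (auto simp: supp_def)
        thus False using \<open>w$k \<noteq> 0\<close> wk by simp
      qed
    qed
    hence wsub: "supp w \<subset> supp u" using k0u k0w by blast
    have wnz: "w \<noteq> 0"
    proof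
      assume "w = 0"
      hence "u = t *\<^sub>R v" by (simp add: w_def)
      hence "supp u = supp v" using t(1) by (auto simp: supp_def)
      thus False using v(2) by simp
    qed
    have vAu: "v \<bullet> (A *v u) = 0"
    proof -
      have "\<forall>k. v$k * (A *v u)$k = 0"
      proof
        fix k show "v$k * (A *v u)$k = 0"
        proof (cases "v$k = 0")
          case False
          hence "u$k \<noteq> 0" using v(2) by (auto simp: supp_def)
          thus ?thesis using zero_Asupp[OF cop less.prems(1)] by simp
        qed simp
      qed
      thus ?thesis unfolding inner_vec_def by (intro sum.neutral) simp
    qed
    have weq: "w = u + (-t) *\<^sub>R v" by (simp add: w_def)
    have "w \<bullet> (A *v w) = u \<bullet> (A *v u) + (-t) * (u \<bullet> (A *v v)) + (-t) * (v \<bullet> (A *v u)) + (-t)*(-t) * (v \<bullet> (A *v v))"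
      unfolding weq by (rule quad_expand)
    also have "u \<bullet> (A *v v) = v \<bullet> (A *v u)" by (rule sym_inner[OF sym])
    finally have "w \<bullet> (A *v w) = 0" using vAu less.prems(1) v(1) by (simp add: is_zero_def)
    hence wz: "is_zero A w" using w0 wnz by (simp add: is_zero_def)
    have Aw: "\<And>k. (A *v w)$k = (A *v u)$k - t * (A *v v)$k"
      by (simp add: w_def matrix_vector_mult_diff_distrib matrix_vector_mult_scaleR)
    have nAw: "\<And>k. 0 \<le> (A *v w)$k" using zero_Anonneg[OF cop wz] .
    have nAv: "\<And>k. 0 \<le> (A *v v)$k" using zero_Anonneg[OF cop v(1)] .
    have Awi: "(A *v w)$m = 0 \<and> (A *v v)$m = 0"
      if h: "(A *v u)$m = 0" for m
    proof -
      have p: "t * (A *v v)$m \<ge> 0" using nAv t(1) by simp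
      have "(A *v w)$m = 0" using Aw[of m] h p nAw[of m] by linarith
      moreover hence "t * (A *v v)$m = 0" using Aw[of m] h by simp
      ultimately show ?thesis using t(1) by simp
    qed
    have Awj: "(A *v w)$j = 0" "(A *v v)$j = 0" "(A *v w)$i = 0" "(A *v v)$i = 0"
      using Awi[OF less.prems(2)] Awi[OF less.prems(3)] by auto
    have "w$i + w$j > 0 \<or> v$i + v$j > 0"
    proof (rule ccontr)
      assume "\<not> ?thesis"
      hence "w$i + w$j \<le> 0" "v$i + v$j \<le> 0" by auto
      moreover have "t * (v$i + v$j) \<le> 0" using t(1) \<open>v$i + v$j \<le> 0\<close> by (simp add: mult_nonneg_nonpos less_imp_le)
      ultimately have "u$i + u$j \<le> 0" using wk[of i] wk[of j] by (simp add: algebra_simps)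
      thus False using less.prems(4) by simp
    qed
    moreover have "card (supp w) < card (supp u)" using wsub by (simp add: psubset_card_mono)
    moreover have "card (supp v) < card (supp u)" using v(2) by (simp add: psubset_card_mono)
    ultimately show ?thesis using less.hyps[of w] less.hyps[of v] wz v(1) Awj by blast
  qed
qed

lemma Emat_sym: "Emat j i = Emat i j"
  by (auto simp: Emat_def vec_eq_iff)

lemma e_nonneg: "\<forall>k. 0 \<le> x$k \<Longrightarrow> 0 \<le> x \<bullet> (Emat i j *v x)"
  by (simp add: Emat_form)

lemma e_bound: "x \<bullet> (Emat i j *v (x::real^'n)) \<le> 2 * (norm x)^2"
proof -
  have a: "\<bar>x$i\<bar> \<le> norm x" "\<bar>x$j\<bar> \<le> norm x" by (simp_all add: component_le_norm_cart)
  have "x$i * x$j \<le> \<bar>x$i\<bar> * \<bar>x$j\<bar>" by (simp add: abs_mult[symmetric])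
  also have "\<dots> \<le> norm x * norm x" using a by (intro mult_mono) auto
  finally have 1: "x$i * x$j \<le> (norm x)^2" by (simp add: power2_eq_square)
  have 2: "x$k * x$k \<le> (norm x)^2" for k
  proof -
    have "x$k * x$k \<le> \<bar>x$k\<bar> * \<bar>x$k\<bar>" by (simp add: abs_mult[symmetric])
    also have "\<dots> \<le> norm x * norm x" by (intro mult_mono) (auto simp: component_le_norm_cart)
    finally show ?thesis by (simp add: power2_eq_square)
  qed
  have 3: "0 \<le> (norm x)^2" by simp
  show ?thesis
  proof (cases "i = j")
    case True
    have "x \<bullet> (Emat i j *v x) = x$i * x$i" using True by (simp add: Emat_form)
    thus ?thesis using 2[of i] 3 by linarith
  next
    case False
    have "x \<bullet> (Emat i j *v x) = 2 * x$i * x$j" using False by (simp add: Emat_form)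
    thus ?thesis using 1 by linarith
  qed
qed

lemma subtract_step:
  assumes cop: "copositive A" and z: "is_zero A z" and x: "\<forall>k. 0 \<le> x$k" and s: "supp z \<subseteq> supp x"
  obtains t v where "t > 0" "\<forall>k. 0 \<le> v$k" "supp v \<subset> supp x" "x = v + t *\<^sub>R z"
    "x \<bullet> (A *v x) = v \<bullet> (A *v v) + 2 * t * (v \<bullet> (A *v z))"
proof -
  have sym: "transpose A = A" using cop by (simp add: copositive_def)
  have z0: "\<forall>k. 0 \<le> z$k" "z \<noteq> 0" using z by (auto simp: is_zero_def)
  obtain t k0 where t: "t > 0" "\<forall>k. 0 \<le> x$k - t * z$k" "z$k0 > 0" "x$k0 - t * z$k0 = 0"
    using min_ratio[OF x z0 s] by blast
  define v where "v = x - t *\<^sub>R z"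
  have vk: "\<And>k. v$k = x$k - t * z$k" by (simp add: v_def)
  have v0: "\<forall>k. 0 \<le> v$k" using t vk by auto
  have "k0 \<in> supp z" using t(3) by (simp add: supp_def)
  hence k0x: "k0 \<in> supp x" using s by blast
  have k0v: "k0 \<notin> supp v" using t(4) vk by (simp add: supp_def)
  have "supp v \<subseteq> supp x"
  proof
    fix k assume "k \<in> supp v"
    hence "v$k \<noteq> 0" by (simp add: supp_def)
    show "k \<in> supp x"
    proof (rule ccontr)
      assume "k \<notin> supp x"
      hence "x$k = 0" "z$k = 0" using s by (auto simp: supp_def)
      thus False using \<open>v$k \<noteq> 0\<close> vk by simp
    qed
  qed
  hence vsub: "supp v \<subset> supp x" using k0x k0v by blast
  have xeq: "x = v + t *\<^sub>R z" by (simp add: v_def)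
  have "x \<bullet> (A *v x) = v \<bullet> (A *v v) + t * (v \<bullet> (A *v z)) + t * (z \<bullet> (A *v v)) + t*t * (z \<bullet> (A *v z))"
    unfolding xeq by (rule quad_expand)
  also have "z \<bullet> (A *v v) = v \<bullet> (A *v z)" by (rule sym_inner[OF sym])
  finally have "x \<bullet> (A *v x) = v \<bullet> (A *v v) + 2 * t * (v \<bullet> (A *v z))"
    using z by (simp add: is_zero_def)
  thus ?thesis using that t(1) v0 vsub xeq by blast
qed

definition noP :: "real^'n^'n \<Rightarrow> 'n \<Rightarrow> 'n \<Rightarrow> bool" where
  "noP A i j \<longleftrightarrow> \<not> (\<exists>u. is_zero A u \<and> (A *v u)$i = 0 \<and> (A *v u)$j = 0 \<and> u$i + u$j > 0)"

lemma noP_sym: "noP A i j \<Longrightarrow> noP A j i"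
  unfolding noP_def by (auto simp: add.commute)

lemma caseB:
  fixes T :: "'n::finite set"
  assumes cop: "copositive A" and np: "noP A i j" and g0: "g0 > 0"
    and D: "\<forall>v. (\<forall>k. 0 \<le> v$k) \<longrightarrow> card (supp v) \<le> n \<longrightarrow> g0 * (v \<bullet> (Emat i j *v v)) \<le> v \<bullet> (A *v v)"
    and z: "is_zero A z" "supp z \<subseteq> T" "z$i > 0"
  shows "\<exists>g>0. \<forall>x. (\<forall>k. 0 \<le> x$k) \<longrightarrow> supp x = T \<longrightarrow> card T \<le> Suc n \<longrightarrow>
            g * (x \<bullet> (Emat i j *v x)) \<le> x \<bullet> (A *v x)"
proof -
  have Azi: "(A *v z)$i = 0" using zero_Asupp[OF cop z(1)] z(3) by simp
  have ij: "i \<noteq> j"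
  proof
    assume "i = j" thus False using np z Azi by (auto simp: noP_def)
  qed
  have Azj: "(A *v z)$j > 0"
  proof -
    have "(A *v z)$j \<noteq> 0" using np z Azi zero_Anonneg[OF cop z(1), of j] by (auto simp: noP_def add_pos_nonneg is_zero_def)
    thus ?thesis using zero_Anonneg[OF cop z(1), of j] by simp
  qed
  have zj: "z$j = 0" using zero_Asupp[OF cop z(1), of j] Azj by auto
  define g where "g = min g0 ((A *v z)$j / z$i)"
  have gpos: "g > 0" using g0 Azj z(3) by (simp add: g_def)
  have gle: "g \<le> g0" "g * z$i \<le> (A *v z)$j" using z(3) by (auto simp: g_def pos_le_divide_eq[symmetric] min.coboundedI2)
  have "\<forall>x. (\<forall>k. 0 \<le> x$k) \<longrightarrow> supp x = T \<longrightarrow> card T \<le> Suc n \<longrightarrow>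
            g * (x \<bullet> (Emat i j *v x)) \<le> x \<bullet> (A *v x)"
  proof (intro allI impI)
    fix x :: "real^'n" assume x: "\<forall>k. 0 \<le> x$k" and sx: "supp x = T" and cT: "card T \<le> Suc n"
    obtain t v where tv: "t > 0" "\<forall>k. 0 \<le> v$k" "supp v \<subset> supp x" "x = v + t *\<^sub>R z"
      "x \<bullet> (A *v x) = v \<bullet> (A *v v) + 2 * t * (v \<bullet> (A *v z))"
      using subtract_step[OF cop z(1) x] z(2) sx by metis
    have "card (supp v) < card (supp x)" using tv(3) by (simp add: psubset_card_mono)
    hence "card (supp v) \<le> n" using sx cT by simp
    hence Dv: "g0 * (v \<bullet> (Emat i j *v v)) \<le> v \<bullet> (A *v v)" using D tv(2) by blast
    have xi: "x$i = v$i + t * z$i" and xj: "x$j = v$j" using tv(4) zj by simp_all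
    have ev: "v \<bullet> (Emat i j *v v) = 2 * v$i * x$j" using ij xj by (simp add: Emat_form)
    have ex: "x \<bullet> (Emat i j *v x) = 2 * x$i * x$j" using ij by (simp add: Emat_form)
    have vAz: "v$j * (A *v z)$j \<le> v \<bullet> (A *v z)"
      using inner_ge_term[OF tv(2)] zero_Anonneg[OF cop z(1)] by blast
    have xj0: "0 \<le> x$j" using x by simp
    have vi0: "0 \<le> v$i" using tv(2) by simp
    have "g * x$i \<le> g0 * v$i + t * (A *v z)$j"
    proof -
      have "g * v$i \<le> g0 * v$i" using gle(1) vi0 by (simp add: mult_right_mono)
      moreover have "t * (g * z$i) \<le> t * (A *v z)$j" using gle(2) tv(1) by simp
      ultimately show ?thesis using xi by (simp add: algebra_simps)
    qed
    hence "2 * x$j * (g * x$i) \<le> 2 * x$j * (g0 * v$i + t * (A *v z)$j)"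
      using xj0 by (simp add: mult_left_mono)
    also have "\<dots> = g0 * (v \<bullet> (Emat i j *v v)) + 2 * t * (v$j * (A *v z)$j)"
      using ev xj by (simp add: algebra_simps)
    also have "\<dots> \<le> v \<bullet> (A *v v) + 2 * t * (v \<bullet> (A *v z))"
      using Dv vAz tv(1) by (simp add: add_mono mult_left_mono)
    finally show "g * (x \<bullet> (Emat i j *v x)) \<le> x \<bullet> (A *v x)" using ex tv(5) by (simp add: algebra_simps)
  qed
  thus ?thesis using gpos by blast
qed

lemma stepT:
  fixes T :: "'n::finite set"
  assumes cop: "copositive A" and np: "noP A i j" and g0: "g0 > 0"
    and D: "\<forall>v. (\<forall>k. 0 \<le> v$k) \<longrightarrow> card (supp v) \<le> n \<longrightarrow> g0 * (v \<bullet> (Emat i j *v v)) \<le> v \<bullet> (A *v v)"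
  shows "\<exists>g>0. \<forall>x. (\<forall>k. 0 \<le> x$k) \<longrightarrow> supp x = T \<longrightarrow> card T \<le> Suc n \<longrightarrow>
            g * (x \<bullet> (Emat i j *v x)) \<le> x \<bullet> (A *v x)"
proof (cases "\<exists>z. is_zero A z \<and> supp z \<subseteq> T")
  case True
  then obtain z where z: "is_zero A z" "supp z \<subseteq> T" by blast
  have z0: "\<forall>k. 0 \<le> z$k" using z by (simp add: is_zero_def)
  show ?thesis
  proof (cases "z$i > 0")
    case True thus ?thesis using caseB[OF cop np g0 D z] by blast
  next
    case notI: False
    show ?thesis
    proof (cases "z$j > 0")
      case True
      have Es: "Emat j i = Emat i j" by (rule Emat_sym)
      have D': "\<forall>v. (\<forall>k. 0 \<le> v$k) \<longrightarrow> card (supp v) \<le> n \<longrightarrow> g0 * (v \<bullet> (Emat j i *v v)) \<le> v \<bullet> (A *v v)"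
        using D unfolding Es .
      show ?thesis using caseB[OF cop noP_sym[OF np] g0 D' z True] unfolding Es .
    next
      case False
      hence zij: "z$i = 0" "z$j = 0" using notI z0 by (auto simp: not_less intro: antisym)
      have "\<forall>x. (\<forall>k. 0 \<le> x$k) \<longrightarrow> supp x = T \<longrightarrow> card T \<le> Suc n \<longrightarrow>
            g0 * (x \<bullet> (Emat i j *v x)) \<le> x \<bullet> (A *v x)"
      proof (intro allI impI)
        fix x :: "real^'n" assume x: "\<forall>k. 0 \<le> x$k" and sx: "supp x = T" and cT: "card T \<le> Suc n"
        obtain t v where tv: "t > 0" "\<forall>k. 0 \<le> v$k" "supp v \<subset> supp x" "x = v + t *\<^sub>R z"
          "x \<bullet> (A *v x) = v \<bullet> (A *v v) + 2 * t * (v \<bullet> (A *v z))"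
          using subtract_step[OF cop z(1) x] z(2) sx by metis
        have "card (supp v) < card (supp x)" using tv(3) by (simp add: psubset_card_mono)
        hence "card (supp v) \<le> n" using sx cT by simp
        hence Dv: "g0 * (v \<bullet> (Emat i j *v v)) \<le> v \<bullet> (A *v v)" using D tv(2) by blast
        have "x$i = v$i" "x$j = v$j" using tv(4) zij by simp_all
        hence ev: "v \<bullet> (Emat i j *v v) = x \<bullet> (Emat i j *v x)" by (simp add: Emat_form)
        have "0 \<le> v \<bullet> (A *v z)" using inner_nonneg_cart[OF tv(2)] zero_Anonneg[OF cop z(1)] by blast
        hence "0 \<le> 2 * t * (v \<bullet> (A *v z))" using tv(1) by simp
        moreover have "g0 * (x \<bullet> (Emat i j *v x)) = g0 * (v \<bullet> (Emat i j *v v))" using ev by simp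
        ultimately show "g0 * (x \<bullet> (Emat i j *v x)) \<le> x \<bullet> (A *v x)" using Dv tv(5) by linarith
      qed
      thus ?thesis using g0 by blast
    qed
  qed
next
  case False
  show ?thesis
  proof (cases "T = {}")
    case True
    have "\<forall>x. (\<forall>k. 0 \<le> x$k) \<longrightarrow> supp x = T \<longrightarrow> card T \<le> Suc n \<longrightarrow>
            1 * (x \<bullet> (Emat i j *v x)) \<le> x \<bullet> (A *v x)"
    proof (intro allI impI)
      fix x :: "real^'n" assume "supp x = T"
      hence "x = 0" using True by (auto simp: supp_def vec_eq_iff)
      thus "1 * (x \<bullet> (Emat i j *v x)) \<le> x \<bullet> (A *v x)" by simp
    qed
    thus ?thesis by (intro exI[of _ 1]) simp
  next
    case Tne: False
    define K where "K = {y::real^'n. norm y = 1} \<inter> {y. \<forall>k. 0 \<le> y$k} \<inter> {y. \<forall>k. k \<notin> T \<longrightarrow> y$k = 0}"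
    have cK: "compact K"
    proof -
      have "compact {y::real^'n. norm y = 1}" using compact_sphere[of "0::real^'n" 1]
        by (simp add: sphere_def dist_norm)
      moreover have "closed {y::real^'n. \<forall>k. 0 \<le> y$k}"
        by (intro closed_Collect_all closed_Collect_le continuous_intros)
      moreover have "closed {y::real^'n. \<forall>k. k \<notin> T \<longrightarrow> y$k = 0}"
        by (intro closed_Collect_all closed_Collect_imp closed_Collect_eq continuous_intros) auto
      ultimately show ?thesis unfolding K_def by (intro compact_Int_closed) auto
    qed
    obtain k1 where k1: "k1 \<in> T" using Tne by blast
    have "axis k1 1 \<in> K" using k1 by (simp add: K_def) (auto simp: axis_def)
    hence Kne: "K \<noteq> {}" by blast
    have cont: "continuous_on K (\<lambda>y::real^'n. y \<bullet> (A *v y))"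
      by (intro continuous_intros matrix_vector_mult_linear_continuous_on)
    obtain y0 where y0: "y0 \<in> K" "\<forall>y\<in>K. y0 \<bullet> (A *v y0) \<le> y \<bullet> (A *v y)"
      using continuous_attains_inf[OF cK Kne cont] by blast
    define m where "m = y0 \<bullet> (A *v y0)"
    have y0nn: "\<forall>k. 0 \<le> y0$k" using y0(1) by (simp add: K_def)
    have "0 \<le> m" using cop y0nn by (simp add: copositive_def m_def)
    moreover have "m \<noteq> 0"
    proof
      assume "m = 0"
      moreover have "y0 \<noteq> 0" using y0(1) by (auto simp: K_def)
      ultimately have "is_zero A y0" using y0nn by (simp add: is_zero_def m_def)
      moreover have "supp y0 \<subseteq> T" using y0(1) by (auto simp: K_def supp_def)
      ultimately show False using False by blast
    qed
    ultimately have mpos: "m > 0" by simp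
    have "\<forall>x. (\<forall>k. 0 \<le> x$k) \<longrightarrow> supp x = T \<longrightarrow> card T \<le> Suc n \<longrightarrow>
            (m/2) * (x \<bullet> (Emat i j *v x)) \<le> x \<bullet> (A *v x)"
    proof (intro allI impI)
      fix x :: "real^'n" assume x: "\<forall>k. 0 \<le> x$k" and sx: "supp x = T"
      have "x \<noteq> 0" using sx k1 by (auto simp: supp_def)
      hence r: "norm x > 0" by simp
      define y where "y = (1 / norm x) *\<^sub>R x"
      have "y \<in> K" using r x sx by (auto simp: K_def y_def supp_def)
      hence my: "m \<le> y \<bullet> (A *v y)" using y0(2) by (simp add: m_def)
      have xy: "x = norm x *\<^sub>R y" using r by (simp add: y_def)
      have qx: "x \<bullet> (A *v x) = (norm x)^2 * (y \<bullet> (A *v y))"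
        by (subst (1 2) xy) (simp add: matrix_vector_mult_scaleR power2_eq_square)
      have "(m/2) * (x \<bullet> (Emat i j *v x)) \<le> (m/2) * (2 * (norm x)^2)"
        using mpos e_bound[of x i j] by (intro mult_left_mono) auto
      also have "\<dots> = (norm x)^2 * m" by simp
      also have "\<dots> \<le> (norm x)^2 * (y \<bullet> (A *v y))" using my by (intro mult_left_mono) auto
      finally show "(m/2) * (x \<bullet> (Emat i j *v x)) \<le> x \<bullet> (A *v x)" using qx by simp
    qed
    thus ?thesis using mpos by (intro exI[of _ "m/2"]) auto
  qed
qed

lemma finite_uniform:
  assumes "finite I" "\<forall>T\<in>I. \<exists>g::real>0. P T g" "\<forall>T g g'. P T g \<longrightarrow> 0 < g' \<longrightarrow> g' \<le> g \<longrightarrow> P T g'"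
  shows "\<exists>g>0. \<forall>T\<in>I. P T g"
  using assms
proof (induction I rule: finite_induct)
  case empty thus ?case by (intro exI[of _ 1]) auto
next
  case (insert a F)
  obtain g1 where g1: "g1 > 0" "\<forall>T\<in>F. P T g1" using insert by blast
  obtain g2 where g2: "g2 > 0" "P a g2" using insert.prems by blast
  have "\<forall>T\<in>insert a F. P T (min g1 g2)" using g1 g2 insert.prems(2) by auto
  thus ?case using g1 g2 by (intro exI[of _ "min g1 g2"]) auto
qed

lemma Dlem:
  fixes A :: "real^'n^'n"
  assumes cop: "copositive A" and np: "noP A i j"
  shows "\<exists>g>0. \<forall>x. (\<forall>k. 0 \<le> x$k) \<longrightarrow> card (supp x) \<le> n \<longrightarrow> g * (x \<bullet> (Emat i j *v x)) \<le> x \<bullet> (A *v x)"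
proof (induction n)
  case 0
  have "\<forall>x. (\<forall>k. 0 \<le> x$k) \<longrightarrow> card (supp x) \<le> 0 \<longrightarrow> 1 * (x \<bullet> (Emat i j *v x)) \<le> x \<bullet> (A *v x)"
  proof (intro allI impI)
    fix x :: "real^'n" assume "card (supp x) \<le> 0"
    hence "supp x = {}" by simp
    hence "x = 0" by (auto simp: supp_def vec_eq_iff)
    thus "1 * (x \<bullet> (Emat i j *v x)) \<le> x \<bullet> (A *v x)" by simp
  qed
  thus ?case by (intro exI[of _ 1]) auto
next
  case (Suc n)
  then obtain g0 where g0: "g0 > 0" "\<forall>v. (\<forall>k. 0 \<le> v$k) \<longrightarrow> card (supp v) \<le> n \<longrightarrow> g0 * (v \<bullet> (Emat i j *v v)) \<le> v \<bullet> (A *v v)"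
    by blast
  let ?P = "\<lambda>T g. \<forall>x. (\<forall>k. 0 \<le> x$k) \<longrightarrow> supp x = T \<longrightarrow> card T \<le> Suc n \<longrightarrow>
            g * (x \<bullet> (Emat i j *v x)) \<le> x \<bullet> (A *v x)"
  have all: "\<forall>T\<in>(UNIV :: 'n set set). \<exists>g>0. ?P T g" using stepT[OF cop np g0(1) g0(2)] by blast
  have mono: "\<forall>T g g'. ?P T g \<longrightarrow> 0 < g' \<longrightarrow> g' \<le> g \<longrightarrow> ?P T g'"
  proof (intro allI impI)
    fix T g g' x assume P: "?P T g" and "0 < g'" "g' \<le> g" and x: "\<forall>k. 0 \<le> (x::real^'n)$k" "supp x = T" "card T \<le> Suc n"
    have "g' * (x \<bullet> (Emat i j *v x)) \<le> g * (x \<bullet> (Emat i j *v x))"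
      using \<open>g' \<le> g\<close> e_nonneg[OF x(1)] by (intro mult_right_mono) auto
    also have "\<dots> \<le> x \<bullet> (A *v x)" using P x by blast
    finally show "g' * (x \<bullet> (Emat i j *v x)) \<le> x \<bullet> (A *v x)" .
  qed
  obtain g where g: "g > 0" "\<forall>T\<in>(UNIV :: 'n set set). ?P T g"
    using finite_uniform[OF _ all mono] by auto
  show ?case using g by (intro exI[of _ g]) auto
qed

lemma smv: "(c *\<^sub>R A) *v (x::real^'n) = c *\<^sub>R (A *v x)"
  by (simp add: vec_eq_iff matrix_vector_mult_def sum_distrib_left mult.assoc)

theorem lemma4p1:
  fixes A :: "real^'n^'n" and i j :: 'n
  assumes "copositive A"
  shows "irreducible_wrt A {Emat i j} \<longleftrightarrow>
    (\<exists>u. minimal_zero A u \<and> (A *v u) $ i = 0 \<and> (A *v u) $ j = 0 \<and> u $ i + u $ j > 0)"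
proof
  assume irr: "irreducible_wrt A {Emat i j}"
  show "\<exists>u. minimal_zero A u \<and> (A *v u) $ i = 0 \<and> (A *v u) $ j = 0 \<and> u $ i + u $ j > 0"
  proof (rule ccontr)
    assume nr: "\<not> ?thesis"
    have np: "noP A i j"
      unfolding noP_def using exists_minimal[OF assms] nr by blast
    obtain g where g: "g > 0" "\<forall>x. (\<forall>k. 0 \<le> x$k) \<longrightarrow> card (supp x) \<le> CARD('n) \<longrightarrow>
        g * (x \<bullet> (Emat i j *v x)) \<le> x \<bullet> (A *v x)"
      using Dlem[OF assms np, of "CARD('n)"] by blast
    have "copositive (A - g *\<^sub>R Emat i j)"
      unfolding copositive_def
    proof (intro conjI allI impI)
      have "transpose A = A" using assms by (simp add: copositive_def)
      thus "transpose (A - g *\<^sub>R Emat i j) = A - g *\<^sub>R Emat i j"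
        using transpose_Emat[of i j] by (simp add: transpose_def vec_eq_iff)
    next
      fix x :: "real^'n" assume x: "\<forall>k. 0 \<le> x$k"
      have "card (supp x) \<le> CARD('n)" by (simp add: card_mono)
      hence "g * (x \<bullet> (Emat i j *v x)) \<le> x \<bullet> (A *v x)" using g(2) x by blast
      thus "0 \<le> x \<bullet> ((A - g *\<^sub>R Emat i j) *v x)"
        by (simp del: scaleR_matrix_vector_assoc add: matrix_vector_mult_diff_rdistrib smv inner_diff_right)
    qed
    thus False using irr g(1) Emat_nz[of i j] unfolding irreducible_wrt_def by blast
  qed
next
  assume "\<exists>u. minimal_zero A u \<and> (A *v u) $ i = 0 \<and> (A *v u) $ j = 0 \<and> u $ i + u $ j > 0"
  then obtain u where u: "is_zero A u" "(A *v u) $ i = 0" "(A *v u) $ j = 0" "u $ i + u $ j > 0"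
    by (auto simp: minimal_zero_def)
  show "irreducible_wrt A {Emat i j}"
    unfolding irreducible_wrt_def
  proof
    assume "\<exists>\<gamma>::real. \<exists>M \<in> {Emat i j} - {0}. \<gamma> > 0 \<and> copositive (A - \<gamma> *\<^sub>R M)"
    then obtain g where g: "g > 0" and cB: "copositive (A - g *\<^sub>R Emat i j)" by blast
    let ?B = "A - g *\<^sub>R Emat i j"
    have u0: "\<forall>k. 0 \<le> u$k" "u \<noteq> 0" using u(1) by (auto simp: is_zero_def)
    have Bu: "\<And>k. (?B *v u)$k = (A *v u)$k - g * (Emat i j *v u)$k"
      by (simp del: scaleR_matrix_vector_assoc add: matrix_vector_mult_diff_rdistrib smv)
    have qB: "u \<bullet> (?B *v u) = - g * (u \<bullet> (Emat i j *v u))"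
      using u(1) by (simp del: scaleR_matrix_vector_assoc add: matrix_vector_mult_diff_rdistrib smv inner_diff_right is_zero_def)
    have "0 \<le> u \<bullet> (?B *v u)" using cB u0(1) by (simp add: copositive_def)
    moreover have "0 \<le> u \<bullet> (Emat i j *v u)" using e_nonneg[OF u0(1)] .
    moreover have "g * (u \<bullet> (Emat i j *v u)) \<le> 0" using qB \<open>0 \<le> u \<bullet> (?B *v u)\<close> by simp
    hence "u \<bullet> (Emat i j *v u) \<le> 0" using g by (simp add: mult_le_0_iff)
    ultimately have e0: "u \<bullet> (Emat i j *v u) = 0" by linarith
    hence zB: "is_zero ?B u" using qB u0 by (simp add: is_zero_def)
    show False
    proof (cases "i = j")
      case True
      hence "u$i * u$i = 0" using e0 by (simp add: Emat_form)
      thus False using u(4) True by simp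
    next
      case False
      hence "2 * u$i * u$j = 0" using e0 by (simp add: Emat_form)
      hence "u$i = 0 \<or> u$j = 0" by simp
      thus False
      proof
        assume ui: "u$i = 0"
        hence uj: "u$j > 0" using u(4) by simp
        have "(?B *v u)$i = - g * u$j" using Bu[of i] u(2) by (simp add: Emat_apply)
        moreover have "0 \<le> (?B *v u)$i" by (rule zero_Anonneg[OF cB zB])
        moreover have "g * u$j > 0" using g uj by simp
        ultimately show False by linarith
      next
        assume uj: "u$j = 0"
        hence ui: "u$i > 0" using u(4) by simp
        have "(?B *v u)$j = - g * u$i" using Bu[of j] u(3) False by (simp add: Emat_apply)
        moreover have "0 \<le> (?B *v u)$j" by (rule zero_Anonneg[OF cB zB])
        moreover have "g * u$i > 0" using g ui by simp
        ultimately show False by linarith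
      qed
    qed
  qed
qed

end
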